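(* The term rewriting system $\mathcal{R}=(\Sigma,V,\geq_s,\Delta)$ described in the context is terminating: for every term $\tau\in T[\Sigma,V]$, every sequence of rewriting steps starting from $\tau$ is finite.
   Context: $\mathbb{F}=\mathbb{GF}(2^n)$. Signature $\Sigma=\mathbb{F}\cup\{\oplus,\otimes,f_1,\dots,f_t\}$: elements of $\mathbb{F}$ are constants, $\oplus,\otimes$ binary (field addition and multiplication), $f_1,\dots,f_t$ unary symbols for affine transformations, each $f$ having an associated affine constant $c_f\in\mathbb{F}$. $V$ is a set of variables, $\Sigma\cap V=\emptyset$, and $\geq_s$ is a total order on $V\uplus\Sigma$. Terms $T[\Sigma,V]$: smallest set containing $\mathbb{F}\cup V$ and closed under $\oplus$, $\otimes$, $f_j$; $T_{\backslash\oplus}(\Sigma,V)$ = terms not using $\oplus$. A factor is a term in $\mathbb{F}\cup V$ or of the form $f_i(\tau')$ with $\tau'\in T_{\backslash\oplus}(\Sigma,V)$; a monomial is a product $\alpha_1\otimes\cdots\otimes\alpha_k$ ($k\ge1$) of nonzero factors (sums and products treated as flat sequences). Factor order $\geq_l$: $\alpha\geq_l\alpha'$ iff (i) $\alpha,\alpha'\in\mathbb{F}\cup V$ and $\alpha\geq_s\alpha'$; or (ii) $\alpha=f(\tau)$, $\alpha'=f'(\tau')$ with $f\geq_s f'$, or $f=f'$ and $\tau\geq_p\tau'$; or (iii) $\alpha=f(\tau)$ and $f\geq_s\alpha'$, or $\alpha'=f(\tau)$ and $\alpha\geq_s f$. Monomial order $\geq_p$: lexicographic comparison (w.r.t. $\geq_l$)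 of the factor sequences sorted in descending $\geq_l$-order. Rules $\Delta$ (with $\tau,\tau_1,\tau_2$ terms, $m_i$ monomials, $\alpha_i$ factors, $f$ an affine symbol with constant $c$): R1: $m_1\oplus\cdots\oplus m_k\mapsto m'_1\oplus\cdots\oplus m'_k$ where $(m'_1,\dots,m'_k)={\tt sort}_{\geq_p}(m_1,\dots,m_k)\neq(m_1,\dots,m_k)$; R2: $\alpha_1\cdots\alpha_k\mapsto\alpha'_1\cdots\alpha'_k$ where $(\alpha'_1,\dots,\alpha'_k)={\tt sort}_{\geq_l}(\alpha_1,\dots,\alpha_k)\neq(\alpha_1,\dots,\alpha_k)$; R3: $\tau\oplus\tau\mapsto0$; R4: $\tau\otimes0\mapsto0$; R5: $0\otimes\tau\mapsto0$; R6: $\tau\oplus0\mapsto\tau$; R7: $0\oplus\tau\mapsto\tau$; R8: $\tau\otimes1\mapsto\tau$; R9: $1\otimes\tau\mapsto\tau$; R10: $(\tau_1\oplus\tau_2)\otimes\tau\mapsto(\tau_1\otimes\tau)\oplus(\tau_2\otimes\tau)$; R11: $\tau\otimes(\tau_1\oplus\tau_2)\mapsto(\tau\otimes\tau_1)\oplus(\tau\otimes\tau_2)$; R12: $f(\tau_1\oplus\tau_2)\mapsto f(\tau_1)\oplus f(\tau_2)\oplus c$; R13: $f(0)\mapsto c$. A rewriting step replaces one occurrence of a subterm matching a left-hand side by the corresponding right-hand side. *)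

theory Defs
  imports Main
begin

text \<open>Terms over the signature: field constants, variables, binary addition and
multiplication, and unary affine symbols.\<close>
datatype ('c, 'v, 'f) trm =
    Cst 'c | Var 'v | Add "('c, 'v, 'f) trm" "('c, 'v, 'f) trm"
  | Mul "('c, 'v, 'f) trm" "('c, 'v, 'f) trm" | Fn 'f "('c, 'v, 'f) trm"

text \<open>The symbols of V disjoint-union Sigma, on which the total order is given.\<close>
datatype ('c, 'v, 'f) sym = SCst 'c | SVar 'v | SAdd | SMul | SFn 'f

fun sym_of :: "('c, 'v, 'f) trm \<Rightarrow> ('c, 'v, 'f) sym" where
  "sym_of (Cst c) = SCst c"
| "sym_of (Var v) = SVar v"
| "sym_of (Add _ _) = SAdd"
| "sym_of (Mul _ _) = SMul"
| "sym_of (Fn f _) = SFn f"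

fun is_atom :: "('c, 'v, 'f) trm \<Rightarrow> bool" where
  "is_atom (Cst _) = True"
| "is_atom (Var _) = True"
| "is_atom _ = False"

text \<open>Flat views of sums and products (sums/products are flat sequences).\<close>
fun sum_leaves :: "('c, 'v, 'f) trm \<Rightarrow> ('c, 'v, 'f) trm list" where
  "sum_leaves (Add a b) = sum_leaves a @ sum_leaves b"
| "sum_leaves t = [t]"

fun prod_leaves :: "('c, 'v, 'f) trm \<Rightarrow> ('c, 'v, 'f) trm list" where
  "prod_leaves (Mul a b) = prod_leaves a @ prod_leaves b"
| "prod_leaves t = [t]"

fun mk_add :: "('c::zero, 'v, 'f) trm list \<Rightarrow> ('c, 'v, 'f) trm" where
  "mk_add [] = Cst 0"
| "mk_add [x] = x"
| "mk_add (x # xs) = Add x (mk_add xs)"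

fun mk_mul :: "('c::one, 'v, 'f) trm list \<Rightarrow> ('c, 'v, 'f) trm" where
  "mk_mul [] = Cst 1"
| "mk_mul [x] = x"
| "mk_mul (x # xs) = Mul x (mk_mul xs)"

fun no_add :: "('c, 'v, 'f) trm \<Rightarrow> bool" where
  "no_add (Cst _) = True"
| "no_add (Var _) = True"
| "no_add (Add _ _) = False"
| "no_add (Mul a b) = (no_add a \<and> no_add b)"
| "no_add (Fn _ t) = no_add t"

fun is_factor :: "('c, 'v, 'f) trm \<Rightarrow> bool" where
  "is_factor (Cst _) = True"
| "is_factor (Var _) = True"
| "is_factor (Fn _ t) = no_add t"
| "is_factor _ = False"

definition is_monomial :: "('c::zero, 'v, 'f) trm \<Rightarrow> bool" where
  "is_monomial t \<longleftrightarrow> (\<forall>a \<in> set (prod_leaves t). is_factor a \<and> a \<noteq> Cst 0)"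

fun ins_by :: "('a \<Rightarrow> 'a \<Rightarrow> bool) \<Rightarrow> 'a \<Rightarrow> 'a list \<Rightarrow> 'a list" where
  "ins_by ge x [] = [x]"
| "ins_by ge x (y # ys) = (if ge x y then x # y # ys else y # ins_by ge x ys)"

definition sort_by :: "('a \<Rightarrow> 'a \<Rightarrow> bool) \<Rightarrow> 'a list \<Rightarrow> 'a list" where
  "sort_by ge xs = foldr (ins_by ge) xs []"

fun lex_ge :: "('a \<Rightarrow> 'a \<Rightarrow> bool) \<Rightarrow> 'a list \<Rightarrow> 'a list \<Rightarrow> bool" where
  "lex_ge ge xs [] = True"
| "lex_ge ge [] (y # ys) = False"
| "lex_ge ge (x # xs) (y # ys) =
     ((ge x y \<and> \<not> ge y x) \<or> (ge x y \<and> ge y x \<and> lex_ge ge xs ys))"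

text \<open>The factor order (with a fuel argument to make the mutual recursion with
the monomial order primitive; sufficient fuel is supplied below).\<close>
primrec gel_fuel :: "('c, 'v, 'f) sym rel \<Rightarrow> nat \<Rightarrow> ('c, 'v, 'f) trm \<Rightarrow> ('c, 'v, 'f) trm \<Rightarrow> bool" where
  "gel_fuel so 0 a b = False"
| "gel_fuel so (Suc n) a b =
    (case a of
       Fn f t \<Rightarrow> (case b of
           Fn g u \<Rightarrow> (f \<noteq> g \<and> (SFn f, SFn g) \<in> so) \<or>
                     (f = g \<and> lex_ge (gel_fuel so n) (sort_by (gel_fuel so n) (prod_leaves t))
                                                   (sort_by (gel_fuel so n) (prod_leaves u)))
         | _ \<Rightarrow> is_atom b \<and> (SFn f, sym_of b) \<in> so)
     | _ \<Rightarrow> is_atom a \<and> (case b of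
           Fn g u \<Rightarrow> (sym_of a, SFn g) \<in> so
         | _ \<Rightarrow> is_atom b \<and> (sym_of a, sym_of b) \<in> so))"

definition ge_l :: "('c, 'v, 'f) sym rel \<Rightarrow> ('c, 'v, 'f) trm \<Rightarrow> ('c, 'v, 'f) trm \<Rightarrow> bool" where
  "ge_l so a b = gel_fuel so (size a + size b) a b"

definition ge_p :: "('c, 'v, 'f) sym rel \<Rightarrow> ('c, 'v, 'f) trm \<Rightarrow> ('c, 'v, 'f) trm \<Rightarrow> bool" where
  "ge_p so m m' = lex_ge (ge_l so) (sort_by (ge_l so) (prod_leaves m))
                                   (sort_by (ge_l so) (prod_leaves m'))"

inductive root_step :: "('c::field, 'v, 'f) sym rel \<Rightarrow> ('f \<Rightarrow> 'c) \<Rightarrow>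
    ('c, 'v, 'f) trm \<Rightarrow> ('c, 'v, 'f) trm \<Rightarrow> bool" for so cf where
  R1: "\<forall>m \<in> set (sum_leaves t). is_monomial m \<Longrightarrow>
       sort_by (ge_p so) (sum_leaves t) \<noteq> sum_leaves t \<Longrightarrow>
       root_step so cf t (mk_add (sort_by (ge_p so) (sum_leaves t)))"
| R2: "\<forall>a \<in> set (prod_leaves t). is_factor a \<Longrightarrow>
       sort_by (ge_l so) (prod_leaves t) \<noteq> prod_leaves t \<Longrightarrow>
       root_step so cf t (mk_mul (sort_by (ge_l so) (prod_leaves t)))"
| R3: "root_step so cf (Add t t) (Cst 0)"
| R4: "root_step so cf (Mul t (Cst 0)) (Cst 0)"
| R5: "root_step so cf (Mul (Cst 0) t) (Cst 0)"
| R6: "root_step so cf (Add t (Cst 0)) t"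
| R7: "root_step so cf (Add (Cst 0) t) t"
| R8: "root_step so cf (Mul t (Cst 1)) t"
| R9: "root_step so cf (Mul (Cst 1) t) t"
| R10: "root_step so cf (Mul (Add t1 t2) t) (Add (Mul t1 t) (Mul t2 t))"
| R11: "root_step so cf (Mul t (Add t1 t2)) (Add (Mul t t1) (Mul t t2))"
| R12: "root_step so cf (Fn f (Add t1 t2)) (Add (Add (Fn f t1) (Fn f t2)) (Cst (cf f)))"
| R13: "root_step so cf (Fn f (Cst 0)) (Cst (cf f))"

inductive ctx_step :: "('c::field, 'v, 'f) sym rel \<Rightarrow> ('f \<Rightarrow> 'c) \<Rightarrow>
    ('c, 'v, 'f) trm \<Rightarrow> ('c, 'v, 'f) trm \<Rightarrow> bool" for so cf where
  root: "root_step so cf s t \<Longrightarrow> ctx_step so cf s t"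
| add1: "ctx_step so cf s t \<Longrightarrow> ctx_step so cf (Add s u) (Add t u)"
| add2: "ctx_step so cf s t \<Longrightarrow> ctx_step so cf (Add u s) (Add u t)"
| mul1: "ctx_step so cf s t \<Longrightarrow> ctx_step so cf (Mul s u) (Mul t u)"
| mul2: "ctx_step so cf s t \<Longrightarrow> ctx_step so cf (Mul u s) (Mul u t)"
| fn: "ctx_step so cf s t \<Longrightarrow> ctx_step so cf (Fn f s) (Fn f t)"

text \<open>Equality modulo associativity of addition and multiplication
(sums and products are flat sequences).\<close>
inductive aeq :: "('c, 'v, 'f) trm \<Rightarrow> ('c, 'v, 'f) trm \<Rightarrow> bool" where
  refl: "aeq t t"
| sym: "aeq s t \<Longrightarrow> aeq t s"
| trans: "aeq s t \<Longrightarrow> aeq t u \<Longrightarrow> aeq s u"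
| assoc_add: "aeq (Add (Add a b) c) (Add a (Add b c))"
| assoc_mul: "aeq (Mul (Mul a b) c) (Mul a (Mul b c))"
| cong_add: "aeq a a' \<Longrightarrow> aeq b b' \<Longrightarrow> aeq (Add a b) (Add a' b')"
| cong_mul: "aeq a a' \<Longrightarrow> aeq b b' \<Longrightarrow> aeq (Mul a b) (Mul a' b')"
| cong_fn: "aeq a a' \<Longrightarrow> aeq (Fn f a) (Fn f a')"

text \<open>One rewriting step of R, on flat terms (i.e. modulo associativity).\<close>
definition rstep :: "('c::field, 'v, 'f) sym rel \<Rightarrow> ('f \<Rightarrow> 'c) \<Rightarrow>
    ('c, 'v, 'f) trm \<Rightarrow> ('c, 'v, 'f) trm \<Rightarrow> bool" where
  "rstep so cf s t \<longleftrightarrow> (\<exists>s' t'. aeq s s' \<and> ctx_step so cf s' t' \<and> aeq t' t)"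

end

theory Submission
  imports Defs "HOL-Library.Multiset"
begin

definition gtr :: "('a \<Rightarrow> 'a \<Rightarrow> bool) \<Rightarrow> 'a \<Rightarrow> 'a \<Rightarrow> bool" where
  "gtr ge x y \<longleftrightarrow> ge x y \<and> \<not> ge y x"

fun ninv :: "('a \<Rightarrow> 'a \<Rightarrow> bool) \<Rightarrow> 'a list \<Rightarrow> nat" where
  "ninv ge [] = 0"
| "ninv ge (x # xs) = length (filter (\<lambda>y. gtr ge y x) xs) + ninv ge xs"

definition cross :: "('a \<Rightarrow> 'a \<Rightarrow> bool) \<Rightarrow> 'a list \<Rightarrow> 'a list \<Rightarrow> nat" where
  "cross ge xs ys = sum_list (map (\<lambda>x. length (filter (\<lambda>y. gtr ge y x) ys)) xs)"

lemma ninv_append: "ninv ge (xs @ ys) = ninv ge xs + ninv ge ys + cross ge xs ys"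
  by (induction xs) (auto simp: cross_def)

lemma cross_mset1: "mset xs = mset xs' \<Longrightarrow> cross ge xs ys = cross ge xs' ys"
  unfolding cross_def
  by (metis mset_map sum_mset_sum_list)

lemma len_filter_mset: "mset ys = mset ys' \<Longrightarrow> length (filter P ys) = length (filter P ys')"
  by (metis mset_filter size_mset)

lemma cross_mset2: "mset ys = mset ys' \<Longrightarrow> cross ge xs ys = cross ge xs ys'"
  unfolding cross_def using len_filter_mset by metis

lemma ninv_bound: "ninv ge xs \<le> length xs * length xs"
proof (induction xs)
  case (Cons x xs)
  have h: "length (filter (\<lambda>y. gtr ge y x) xs) \<le> length xs" by simp
  have e1: "ninv ge (x#xs) = length (filter (\<lambda>y. gtr ge y x) xs) + ninv ge xs" by simp
  have e2: "length (x#xs) * length (x#xs) = Suc (length xs) * Suc (length xs)" by simp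
  show ?case unfolding e1 e2 by (rule order_trans[OF add_le_mono[OF h Cons.IH]]) simp
qed simp

lemma ninv_map: "(\<And>x y. ge (f x) (f y) = ge' x y) \<Longrightarrow> ninv ge (map f xs) = ninv ge' xs"
  by (induction xs) (auto simp: gtr_def filter_map o_def)

lemma mset_ins: "mset (ins_by ge x ys) = add_mset x (mset ys)"
  by (induction ys) auto

lemma mset_sort: "mset (sort_by ge xs) = mset xs"
  by (induction xs) (auto simp: sort_by_def mset_ins)

lemma set_sort: "set (sort_by ge xs) = set xs"
  by (metis mset_sort set_mset_mset)

lemma length_sort: "length (sort_by ge xs) = length xs"
  by (metis mset_sort size_mset)

lemma ins_map: "(\<And>x y. ge (f x) (f y) = ge' x y) \<Longrightarrow> ins_by ge (f x) (map f ys) = map f (ins_by ge' x ys)"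
  by (induction ys) auto

lemma sort_map: "(\<And>x y. ge (f x) (f y) = ge' x y) \<Longrightarrow> sort_by ge (map f xs) = map f (sort_by ge' xs)"
  by (induction xs) (auto simp: sort_by_def ins_map)

lemma ins_cong: "(\<And>y. y \<in> set ys \<Longrightarrow> ge x y = ge' x y) \<Longrightarrow> ins_by ge x ys = ins_by ge' x ys"
  by (induction ys) auto

lemma sort_cong: "(\<And>x y. x \<in> set xs \<Longrightarrow> y \<in> set xs \<Longrightarrow> ge x y = ge' x y) \<Longrightarrow> sort_by ge xs = sort_by ge' xs"
proof (induction xs)
  case (Cons a xs)
  have "sort_by ge xs = sort_by ge' xs" using Cons by auto
  moreover have "ins_by ge a (sort_by ge' xs) = ins_by ge' a (sort_by ge' xs)"
    by (rule ins_cong) (use Cons.prems in \<open>auto simp: set_sort\<close>)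
  ultimately show ?case by (simp add: sort_by_def)
qed (simp add: sort_by_def)

lemma lex_cong: "(\<And>x y. x \<in> set xs \<Longrightarrow> y \<in> set ys \<Longrightarrow> ge x y = ge' x y \<and> ge y x = ge' y x) \<Longrightarrow>
   lex_ge ge xs ys = lex_ge ge' xs ys"
  by (induction ge xs ys rule: lex_ge.induct) auto

lemma lex_map: "(\<And>x y. ge (f x) (f y) = ge' x y) \<Longrightarrow> lex_ge ge (map f xs) (map f ys) = lex_ge ge' xs ys"
  by (induction ge' xs ys rule: lex_ge.induct) auto

definition tot_on :: "'a set \<Rightarrow> ('a \<Rightarrow> 'a \<Rightarrow> bool) \<Rightarrow> bool" where
  "tot_on A ge \<longleftrightarrow> (\<forall>x\<in>A. \<forall>y\<in>A. ge x y \<or> ge y x)"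

definition trn_on :: "'a set \<Rightarrow> ('a \<Rightarrow> 'a \<Rightarrow> bool) \<Rightarrow> bool" where
  "trn_on A ge \<longleftrightarrow> (\<forall>x\<in>A. \<forall>y\<in>A. \<forall>z\<in>A. ge x y \<longrightarrow> ge y z \<longrightarrow> ge x z)"

lemma trn_onD: "trn_on A ge \<Longrightarrow> a \<in> A \<Longrightarrow> b \<in> A \<Longrightarrow> c \<in> A \<Longrightarrow> ge a b \<Longrightarrow> ge b c \<Longrightarrow> ge a c"
  unfolding trn_on_def by blast

lemma tot_onD: "tot_on A ge \<Longrightarrow> a \<in> A \<Longrightarrow> b \<in> A \<Longrightarrow> ge a b \<or> ge b a"
  unfolding tot_on_def by blast

lemma tot_on_mono: "tot_on B ge \<Longrightarrow> A \<subseteq> B \<Longrightarrow> tot_on A ge"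
  unfolding tot_on_def by blast

lemma trn_on_mono: "trn_on B ge \<Longrightarrow> A \<subseteq> B \<Longrightarrow> trn_on A ge"
  unfolding trn_on_def by blast

lemma T1: "tot_on (set xs) ge \<Longrightarrow> ninv ge xs = 0 \<Longrightarrow> sort_by ge xs = xs"
proof (induction xs)
  case (Cons x xs)
  have tx: "tot_on (set xs) ge" by (rule tot_on_mono[OF Cons.prems(1)]) auto
  have s: "sort_by ge xs = xs" using Cons tx by simp
  show ?case
  proof (cases xs)
    case Nil then show ?thesis by (simp add: sort_by_def)
  next
    case (Cons y ys)
    have "ge x y"
    proof -
      have "\<not> gtr ge y x" using Cons.prems(2) \<open>xs = y # ys\<close>
        by (auto simp: filter_empty_conv)
      then show ?thesis using tot_onD[OF Cons.prems(1), of x y] \<open>xs = y # ys\<close> by (auto simp: gtr_def)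
    qed
    then show ?thesis using s \<open>xs = y # ys\<close> by (simp add: sort_by_def)
  qed
qed (simp add: sort_by_def)

lemma sorted_ninv: "sorted_wrt ge ys \<Longrightarrow> ninv ge ys = 0"
  by (induction ys) (auto simp: gtr_def filter_empty_conv)

lemma ins_sorted: "tot_on (insert x (set ys)) ge \<Longrightarrow> trn_on (insert x (set ys)) ge \<Longrightarrow>
  sorted_wrt ge ys \<Longrightarrow> sorted_wrt ge (ins_by ge x ys)"
proof (induction ys)
  case (Cons y ys)
  have tr: "\<And>a b c. a \<in> insert x (set (y#ys)) \<Longrightarrow> b \<in> insert x (set (y#ys)) \<Longrightarrow> c \<in> insert x (set (y#ys)) \<Longrightarrow> ge a b \<Longrightarrow> ge b c \<Longrightarrow> ge a c"
    by (rule trn_onD[OF Cons.prems(2)])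
  show ?case
  proof (cases "ge x y")
    case True
    have "\<forall>z\<in>set ys. ge x z"
    proof
      fix z assume "z \<in> set ys"
      then have "ge y z" using Cons.prems(3) by simp
      then show "ge x z" using tr[of x y z] True \<open>z \<in> set ys\<close> by simp
    qed
    then show ?thesis using True Cons.prems(3) by simp
  next
    case False
    then have "ge y x" using tot_onD[OF Cons.prems(1), of x y] by simp
    have p1: "tot_on (insert x (set ys)) ge" by (rule tot_on_mono[OF Cons.prems(1)]) auto
    have p2: "trn_on (insert x (set ys)) ge" by (rule trn_on_mono[OF Cons.prems(2)]) auto
    have IH: "sorted_wrt ge (ins_by ge x ys)"
      using Cons.IH[OF p1 p2] Cons.prems(3) by simp
    have "set (ins_by ge x ys) = insert x (set ys)"
      by (metis mset_ins set_mset_add_mset_insert set_mset_mset)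
    then show ?thesis using False IH \<open>ge y x\<close> Cons.prems(3) by simp
  qed
qed simp

lemma sort_sorted: "tot_on (set xs) ge \<Longrightarrow> trn_on (set xs) ge \<Longrightarrow> sorted_wrt ge (sort_by ge xs)"
proof (induction xs)
  case (Cons x xs)
  have p1: "tot_on (set xs) ge" by (rule tot_on_mono[OF Cons.prems(1)]) auto
  have p2: "trn_on (set xs) ge" by (rule trn_on_mono[OF Cons.prems(2)]) auto
  have "sorted_wrt ge (sort_by ge xs)" using Cons.IH[OF p1 p2] .
  moreover have "sort_by ge (x # xs) = ins_by ge x (sort_by ge xs)" by (simp add: sort_by_def)
  moreover have "insert x (set (sort_by ge xs)) = set (x # xs)" by (simp add: set_sort)
  ultimately show ?case using ins_sorted[of x "sort_by ge xs" ge] Cons.prems by simp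
qed (simp add: sort_by_def)

lemma lex_total: "tot_on A ge \<Longrightarrow> set xs \<subseteq> A \<Longrightarrow> set ys \<subseteq> A \<Longrightarrow> lex_ge ge xs ys \<or> lex_ge ge ys xs"
  by (induction ge xs ys rule: lex_ge.induct) (auto simp: tot_on_def)

lemma lex_trans: "trn_on A ge \<Longrightarrow> set xs \<subseteq> A \<Longrightarrow> set ys \<subseteq> A \<Longrightarrow> set zs \<subseteq> A \<Longrightarrow>
   lex_ge ge xs ys \<Longrightarrow> lex_ge ge ys zs \<Longrightarrow> lex_ge ge xs zs"
proof (induction xs arbitrary: ys zs)
  case Nil then show ?case by (cases ys; cases zs) auto
next
  case (Cons x xs)
  show ?case
  proof (cases zs)
    case Nil then show ?thesis by simp
  next
    case zs: (Cons z zs')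
    obtain y ys' where ys: "ys = y # ys'" using Cons.prems(5,6) zs by (cases ys) auto
    have A: "x \<in> A" "y \<in> A" "z \<in> A" using Cons.prems(2,3,4) ys zs by auto
    have tr: "\<And>a b c. a \<in> A \<Longrightarrow> b \<in> A \<Longrightarrow> c \<in> A \<Longrightarrow> ge a b \<Longrightarrow> ge b c \<Longrightarrow> ge a c"
      using trn_onD[OF Cons.prems(1)] by blast
    have xy: "(ge x y \<and> \<not> ge y x) \<or> (ge x y \<and> ge y x \<and> lex_ge ge xs ys')"
      using Cons.prems(5) ys by simp
    have yz: "(ge y z \<and> \<not> ge z y) \<or> (ge y z \<and> ge z y \<and> lex_ge ge ys' zs')"
      using Cons.prems(6) ys zs by simp
    have s1: "set xs \<subseteq> A" "set ys' \<subseteq> A" "set zs' \<subseteq> A" using Cons.prems(2,3,4) ys zs by auto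
    have IH: "lex_ge ge xs zs'" if "lex_ge ge xs ys'" "lex_ge ge ys' zs'"
      by (rule Cons.IH[OF Cons.prems(1) s1 that])
    have t1: "ge x y \<Longrightarrow> ge y z \<Longrightarrow> ge x z" by (rule tr[OF A(1) A(2) A(3)])
    have t2: "ge y z \<Longrightarrow> ge z x \<Longrightarrow> ge y x" by (rule tr[OF A(2) A(3) A(1)])
    have t3: "ge z x \<Longrightarrow> ge x y \<Longrightarrow> ge z y" by (rule tr[OF A(3) A(1) A(2)])
    have "(ge x z \<and> \<not> ge z x) \<or> (ge x z \<and> ge z x \<and> lex_ge ge xs zs')"
      using xy yz t1 t2 t3 IH by blast
    then show ?thesis unfolding zs by simp
  qed
qed

fun is_add :: "('c, 'v, 'f) trm \<Rightarrow> bool" where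
  "is_add (Add _ _) = True" | "is_add _ = False"
fun is_mul :: "('c, 'v, 'f) trm \<Rightarrow> bool" where
  "is_mul (Mul _ _) = True" | "is_mul _ = False"

fun radd :: "('c, 'v, 'f) trm \<Rightarrow> ('c, 'v, 'f) trm \<Rightarrow> ('c, 'v, 'f) trm" where
  "radd (Add x y) z = Add x (radd y z)" | "radd x z = Add x z"
fun rmul :: "('c, 'v, 'f) trm \<Rightarrow> ('c, 'v, 'f) trm \<Rightarrow> ('c, 'v, 'f) trm" where
  "rmul (Mul x y) z = Mul x (rmul y z)" | "rmul x z = Mul x z"

fun flat :: "('c, 'v, 'f) trm \<Rightarrow> ('c, 'v, 'f) trm" where
  "flat (Add a b) = radd (flat a) (flat b)"
| "flat (Mul a b) = rmul (flat a) (flat b)"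
| "flat (Fn f t) = Fn f (flat t)"
| "flat (Cst c) = Cst c"
| "flat (Var v) = Var v"

lemma radd_ex: "\<exists>p q. radd x z = Add p q" by (cases x) auto
lemma rmul_ex: "\<exists>p q. rmul x z = Mul p q" by (cases x) auto

lemma sl_radd: "sum_leaves (radd x z) = sum_leaves x @ sum_leaves z"
  by (induction x z rule: radd.induct) auto
lemma pl_rmul: "prod_leaves (rmul x z) = prod_leaves x @ prod_leaves z"
  by (induction x z rule: rmul.induct) auto
lemma radd_assoc: "radd (radd a b) c = radd a (radd b c)"
  by (induction a b rule: radd.induct) auto
lemma rmul_assoc: "rmul (rmul a b) c = rmul a (rmul b c)"
  by (induction a b rule: rmul.induct) auto
lemma size_radd: "size (radd x z) = size x + size z + 1"
  by (induction x z rule: radd.induct) auto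
lemma size_rmul: "size (rmul x z) = size x + size z + 1"
  by (induction x z rule: rmul.induct) auto

lemma flat_aeq: "aeq s t \<Longrightarrow> flat s = flat t"
  by (induction rule: aeq.induct) (auto simp: radd_assoc rmul_assoc)

lemma is_radd: "is_add (radd x z) \<and> \<not> is_mul (radd x z)"
  by (induction x z rule: radd.induct) auto
lemma is_rmul: "is_mul (rmul x z) \<and> \<not> is_add (rmul x z)"
  by (induction x z rule: rmul.induct) auto
lemma is_add_flat: "is_add (flat t) = is_add t"
  by (cases t) (auto simp: is_radd is_rmul)
lemma is_mul_flat: "is_mul (flat t) = is_mul t"
  by (cases t) (auto simp: is_radd is_rmul)

lemma sl_nonadd: "\<not> is_add t \<Longrightarrow> sum_leaves t = [t]"
  by (cases t) auto
lemma pl_nonmul: "\<not> is_mul t \<Longrightarrow> prod_leaves t = [t]"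
  by (cases t) auto

lemma sl_flat: "sum_leaves (flat t) = map flat (sum_leaves t)"
proof (induction t)
  case (Add a b) then show ?case by (simp add: sl_radd)
next
  case (Mul a b) then show ?case using rmul_ex[of "flat a" "flat b"] by auto
qed auto

lemma pl_flat: "prod_leaves (flat t) = map flat (prod_leaves t)"
proof (induction t)
  case (Mul a b) then show ?case by (simp add: pl_rmul)
next
  case (Add a b) then show ?case using radd_ex[of "flat a" "flat b"] by auto
qed auto

lemma size_flat: "size (flat t) = size t"
  by (induction t) (auto simp: size_radd size_rmul)

lemma sl_leaf: "l \<in> set (sum_leaves t) \<Longrightarrow> \<not> is_add l"
  by (induction t rule: sum_leaves.induct) auto
lemma pl_leaf: "l \<in> set (prod_leaves t) \<Longrightarrow> \<not> is_mul l"
  by (induction t rule: prod_leaves.induct) auto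

lemma sl_ne: "sum_leaves t \<noteq> []" by (induction t rule: sum_leaves.induct) auto
lemma pl_ne: "prod_leaves t \<noteq> []" by (induction t rule: prod_leaves.induct) auto

lemma size_sl: "size t + 1 = sum_list (map (\<lambda>l. size l + 1) (sum_leaves t))"
  by (induction t rule: sum_leaves.induct) auto
lemma size_pl: "size t + 1 = sum_list (map (\<lambda>l. size l + 1) (prod_leaves t))"
  by (induction t rule: prod_leaves.induct) auto

lemma size_pos: "size (t :: ('c,'v,'f) trm) \<ge> 1" by (cases t) auto

lemma sum_list_ge_len: "sum_list (map (\<lambda>l. size l + 1) xs) \<ge> 2 * length (xs :: ('c,'v,'f) trm list)"
proof (induction xs)
  case (Cons x xs)
  have "size x \<ge> 1" by (rule size_pos)
  then show ?case using Cons by simp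
qed simp

lemma length_sl: "length (sum_leaves t) \<le> size t"
  using size_sl[of t] sum_list_ge_len[of "sum_leaves t"] by linarith
lemma length_pl: "length (prod_leaves t) \<le> size t"
  using size_pl[of t] sum_list_ge_len[of "prod_leaves t"] by linarith

lemma mk_add_sl: "xs \<noteq> [] \<Longrightarrow> (\<forall>x\<in>set xs. \<not> is_add x) \<Longrightarrow> sum_leaves (mk_add xs) = xs"
  by (induction xs rule: mk_add.induct) (auto simp: sl_nonadd)
lemma mk_mul_pl: "xs \<noteq> [] \<Longrightarrow> (\<forall>x\<in>set xs. \<not> is_mul x) \<Longrightarrow> prod_leaves (mk_mul xs) = xs"
  by (induction xs rule: mk_mul.induct) (auto simp: pl_nonmul)
lemma mk_add_is: "length xs \<ge> 2 \<Longrightarrow> is_add (mk_add xs)"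
  by (induction xs rule: mk_add.induct) auto
lemma mk_mul_is: "length xs \<ge> 2 \<Longrightarrow> is_mul (mk_mul xs)"
  by (induction xs rule: mk_mul.induct) auto
lemma mk_add_nm: "length xs \<ge> 2 \<Longrightarrow> \<not> is_mul (mk_add xs)"
  by (induction xs rule: mk_add.induct) auto
lemma mk_mul_na: "length xs \<ge> 2 \<Longrightarrow> \<not> is_add (mk_mul xs)"
  by (induction xs rule: mk_mul.induct) auto

lemma sum_list_mset: "mset xs = mset ys \<Longrightarrow> sum_list (map f xs) = (sum_list (map f ys) :: nat)"
  by (metis mset_map sum_mset_sum_list)
lemma prod_list_mset: "mset xs = mset ys \<Longrightarrow> prod_list (map f xs) = (prod_list (map f ys) :: nat)"
  by (metis mset_map prod_mset_prod_list)

fun PP :: "('c, 'v, 'f) trm \<Rightarrow> nat" where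
  "PP (Cst _) = 3" | "PP (Var _) = 3"
| "PP (Add a b) = PP a + PP b + 1"
| "PP (Mul a b) = PP a * PP b"
| "PP (Fn f t) = 2 ^ PP t"

lemma PP_ge: "PP t \<ge> 3"
proof (induction t)
  case (Mul a b)
  then have "3 * 1 \<le> PP a * PP b" by (intro mult_mono) auto
  then show ?case by simp
next
  case (Fn f t)
  have "(2::nat) ^ 3 \<le> 2 ^ PP t" using Fn by (intro power_increasing) auto
  then show ?case by simp
qed auto

lemma PP_radd: "PP (radd x z) = PP x + PP z + 1"
  by (induction x z rule: radd.induct) auto
lemma PP_rmul: "PP (rmul x z) = PP x * PP z"
  by (induction x z rule: rmul.induct) auto
lemma PP_flat: "PP (flat t) = PP t"
  by (induction t) (auto simp: PP_radd PP_rmul)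

lemma PP_sl: "PP t + 1 = sum_list (map (\<lambda>l. PP l + 1) (sum_leaves t))"
  by (induction t rule: sum_leaves.induct) auto
lemma PP_pl: "PP t = prod_list (map PP (prod_leaves t))"
  by (induction t rule: prod_leaves.induct) auto

fun fd :: "('c, 'v, 'f) trm \<Rightarrow> nat" where
  "fd (Fn f t) = Suc (fd t)"
| "fd (Add a b) = max (fd a) (fd b)"
| "fd (Mul a b) = max (fd a) (fd b)"
| "fd _ = 0"

lemma fd_pl: "l \<in> set (prod_leaves t) \<Longrightarrow> fd l \<le> fd t"
  by (induction t rule: prod_leaves.induct) auto

lemma fd_size: "fd t < size t"
  by (induction t) auto

lemma fuel: "fd a < n \<Longrightarrow> fd b < n \<Longrightarrow> n \<le> m \<Longrightarrow> gel_fuel so m a b = gel_fuel so n a b"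
proof (induction n arbitrary: m a b)
  case 0 then show ?case by simp
next
  case (Suc k)
  then obtain k' where m: "m = Suc k'" and kk: "k \<le> k'" by (cases m) auto
  show ?case
  proof (cases "\<exists>f t g u. a = Fn f t \<and> b = Fn g u")
    case True
    then obtain f t g u where ab: "a = Fn f t" "b = Fn g u" by blast
    have agree: "gel_fuel so k' x y = gel_fuel so k x y"
      if "x \<in> set (prod_leaves t) \<union> set (prod_leaves u)" "y \<in> set (prod_leaves t) \<union> set (prod_leaves u)" for x y
    proof -
      have "fd x < k" "fd y < k" using that fd_pl[of x t] fd_pl[of x u] fd_pl[of y t] fd_pl[of y u]
          Suc.prems ab by auto
      then show ?thesis using Suc.IH kk by blast
    qed
    have s1: "sort_by (gel_fuel so k') (prod_leaves t) = sort_by (gel_fuel so k) (prod_leaves t)"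
      by (rule sort_cong) (use agree in auto)
    have s2: "sort_by (gel_fuel so k') (prod_leaves u) = sort_by (gel_fuel so k) (prod_leaves u)"
      by (rule sort_cong) (use agree in auto)
    have l: "lex_ge (gel_fuel so k') (sort_by (gel_fuel so k) (prod_leaves t)) (sort_by (gel_fuel so k) (prod_leaves u))
        = lex_ge (gel_fuel so k) (sort_by (gel_fuel so k) (prod_leaves t)) (sort_by (gel_fuel so k) (prod_leaves u))"
      by (rule lex_cong) (use agree in \<open>auto simp: set_sort\<close>)
    show ?thesis unfolding m ab using s1 s2 l by simp
  next
    case False
    then show ?thesis unfolding m
      by (cases a; cases b) auto
  qed
qed

definition G :: "('c, 'v, 'f) sym rel \<Rightarrow> ('c, 'v, 'f) trm \<Rightarrow> ('c, 'v, 'f) trm \<Rightarrow> bool" where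
  "G so a b = gel_fuel so (Suc (max (fd a) (fd b))) a b"

lemma gel_G: "fd a < n \<Longrightarrow> fd b < n \<Longrightarrow> gel_fuel so n a b = G so a b"
  unfolding G_def by (rule fuel) auto

lemma ge_l_G: "ge_l so = G so"
proof (intro ext)
  fix a b :: "('a, 'b, 'c) trm"
  show "ge_l so a b = G so a b" unfolding ge_l_def
    using fd_size[of a] fd_size[of b] by (intro gel_G) auto
qed

lemma G_Fn: "G so (Fn f t) (Fn g u) = ((f \<noteq> g \<and> (SFn f, SFn g) \<in> so) \<or>
   (f = g \<and> lex_ge (G so) (sort_by (G so) (prod_leaves t)) (sort_by (G so) (prod_leaves u))))"
proof -
  let ?k = "max (fd t) (fd u)"
  have agree: "gel_fuel so (Suc ?k) x y = G so x y"
    if "x \<in> set (prod_leaves t) \<union> set (prod_leaves u)" "y \<in> set (prod_leaves t) \<union> set (prod_leaves u)" for x y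
    using that fd_pl[of x t] fd_pl[of x u] fd_pl[of y t] fd_pl[of y u]
    by (intro gel_G) auto
  have s1: "sort_by (gel_fuel so (Suc ?k)) (prod_leaves t) = sort_by (G so) (prod_leaves t)"
    by (rule sort_cong) (use agree in auto)
  have s2: "sort_by (gel_fuel so (Suc ?k)) (prod_leaves u) = sort_by (G so) (prod_leaves u)"
    by (rule sort_cong) (use agree in auto)
  have l: "lex_ge (gel_fuel so (Suc ?k)) (sort_by (G so) (prod_leaves t)) (sort_by (G so) (prod_leaves u))
        = lex_ge (G so) (sort_by (G so) (prod_leaves t)) (sort_by (G so) (prod_leaves u))"
    by (rule lex_cong) (use agree in \<open>auto simp: set_sort\<close>)
  have "G so (Fn f t) (Fn g u) = gel_fuel so (Suc (Suc ?k)) (Fn f t) (Fn g u)"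
    unfolding G_def by simp
  then show ?thesis using s1 s2 l by simp
qed

fun key :: "('c, 'v, 'f) trm \<Rightarrow> ('c, 'v, 'f) sym" where
  "key (Fn f _) = SFn f" | "key t = sym_of t"

lemma G_other: "is_factor a \<Longrightarrow> is_factor b \<Longrightarrow> \<not> (\<exists>f t u. a = Fn f t \<and> b = Fn f u) \<Longrightarrow>
   G so a b = ((key a, key b) \<in> so)"
  unfolding G_def by (cases a; cases b) auto

lemma G_samekey: "is_factor a \<Longrightarrow> is_factor b \<Longrightarrow> key a = key b \<Longrightarrow>
   a = b \<or> (\<exists>f t u. a = Fn f t \<and> b = Fn f u)"
  by (cases a; cases b) auto

lemma factor_leaves: "is_factor (Fn f t) \<Longrightarrow> l \<in> set (prod_leaves t) \<Longrightarrow> is_factor l"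
proof -
  have "no_add t \<Longrightarrow> l \<in> set (prod_leaves t) \<Longrightarrow> is_factor l"
    by (induction t rule: prod_leaves.induct) auto
  then show "is_factor (Fn f t) \<Longrightarrow> l \<in> set (prod_leaves t) \<Longrightarrow> is_factor l" by simp
qed

definition Fk :: "nat \<Rightarrow> ('c, 'v, 'f) trm set" where
  "Fk k = {a. is_factor a \<and> fd a \<le> k}"

lemma preorder_step:
  assumes lin: "linear_order_on UNIV so"
    and SF: "\<And>a. a \<in> S \<Longrightarrow> is_factor a"
    and SL: "\<And>f t l. Fn f t \<in> S \<Longrightarrow> l \<in> set (prod_leaves t) \<Longrightarrow> l \<in> L"
    and tL: "tot_on L (G so)" and rL: "trn_on L (G so)"
  shows "tot_on S (G so) \<and> trn_on S (G so)"
proof -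
  have refl: "(x, x) \<in> so" for x using lin
    unfolding linear_order_on_def partial_order_on_def preorder_on_def refl_on_def by auto
  have trs: "(x, y) \<in> so \<Longrightarrow> (y, z) \<in> so \<Longrightarrow> (x, z) \<in> so" for x y z using lin
    unfolding linear_order_on_def partial_order_on_def preorder_on_def trans_def by blast
  have ant: "(x, y) \<in> so \<Longrightarrow> (y, x) \<in> so \<Longrightarrow> x = y" for x y using lin
    unfolding linear_order_on_def partial_order_on_def antisym_def by blast
  have tot: "x \<noteq> y \<Longrightarrow> (x, y) \<in> so \<or> (y, x) \<in> so" for x y using lin
    unfolding linear_order_on_def total_on_def by blast
  have subL: "set (sort_by (G so) (prod_leaves t)) \<subseteq> L" if "Fn f t \<in> S" for f t
    using SL[OF that] by (auto simp: set_sort)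
  have Gkey: "(key a, key b) \<in> so" if "a \<in> S" "b \<in> S" "G so a b" for a b
  proof (cases "\<exists>f t u. a = Fn f t \<and> b = Fn f u")
    case True then show ?thesis using refl by auto
  next
    case False then show ?thesis using G_other[OF SF SF False] that by auto
  qed
  have T: "G so a b \<or> G so b a" if "a \<in> S" "b \<in> S" for a b
  proof (cases "\<exists>f t u. a = Fn f t \<and> b = Fn f u")
    case True
    then obtain f t u where ab: "a = Fn f t" "b = Fn f u" by blast
    show ?thesis unfolding ab G_Fn
      using lex_total[OF tL subL subL] that ab by auto
  next
    case False
    then have F2: "\<not> (\<exists>f t u. b = Fn f t \<and> a = Fn f u)" by blast
    show ?thesis
    proof (cases "key a = key b")
      case True
      then have "a = b" using G_samekey[OF SF[OF that(1)] SF[OF that(2)]] False by blast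
      then show ?thesis using G_other[OF SF SF False] that refl by auto
    next
      case False2: False
      then show ?thesis using G_other[OF SF SF False] G_other[OF SF SF F2] that tot by auto
    qed
  qed
  have R: "G so a c" if "a \<in> S" "b \<in> S" "c \<in> S" "G so a b" "G so b c" for a b c
  proof -
    have "(key a, key b) \<in> so" by (rule Gkey[OF that(1,2,4)])
    moreover have "(key b, key c) \<in> so" by (rule Gkey[OF that(2,3,5)])
    ultimately have "(key a, key c) \<in> so" by (rule trs)
    show ?thesis
    proof (cases "key a = key c")
      case False
      have "\<not> (\<exists>f t u. a = Fn f t \<and> c = Fn f u)" using False by auto
      then show ?thesis using G_other[OF SF[OF that(1)] SF[OF that(3)]] \<open>(key a, key c) \<in> so\<close> by simp
    next
      case True
      have "(key a, key b) \<in> so" by (rule Gkey[OF that(1,2,4)])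
      moreover have "(key b, key a) \<in> so" using Gkey[OF that(2,3,5)] True by simp
      ultimately have "key a = key b" by (rule ant)
      then have kb: "key b = key c" using True by simp
      show ?thesis
      proof (cases "\<exists>f t u. a = Fn f t \<and> c = Fn f u")
        case False
        then have "a = c" using G_samekey[OF SF[OF that(1)] SF[OF that(3)] True] by blast
        then show ?thesis using G_other[OF SF SF False] that refl by auto
      next
        case True2: True
        then obtain f t w where ac: "a = Fn f t" "c = Fn f w" by blast
        then obtain u where b: "b = Fn f u" using \<open>key a = key b\<close> by (cases b) auto
        have S3: "Fn f t \<in> S" "Fn f u \<in> S" "Fn f w \<in> S" using that(1,2,3) ac b by auto
        have l1: "lex_ge (G so) (sort_by (G so) (prod_leaves t)) (sort_by (G so) (prod_leaves u))"
          using that(4) unfolding ac b G_Fn by simp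
        have l2: "lex_ge (G so) (sort_by (G so) (prod_leaves u)) (sort_by (G so) (prod_leaves w))"
          using that(5) unfolding ac b G_Fn by simp
        have "lex_ge (G so) (sort_by (G so) (prod_leaves t)) (sort_by (G so) (prod_leaves w))"
          by (rule lex_trans[OF rL subL[OF S3(1)] subL[OF S3(2)] subL[OF S3(3)] l1 l2])
        then show ?thesis unfolding ac G_Fn by simp
      qed
    qed
  qed
  have "tot_on S (G so)" unfolding tot_on_def using T by blast
  moreover have "trn_on S (G so)" unfolding trn_on_def
  proof (intro ballI impI)
    fix a b c assume "a \<in> S" "b \<in> S" "c \<in> S" "G so a b" "G so b c"
    then show "G so a c" by (rule R)
  qed
  ultimately show ?thesis by simp
qed

lemma Fk_pre: "linear_order_on UNIV so \<Longrightarrow> tot_on (Fk k) (G so) \<and> trn_on (Fk k) (G so)"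
proof (induction k)
  case 0
  show ?case
  proof (rule preorder_step[OF 0, where L = "{}"])
    show "tot_on {} (G so)" "trn_on {} (G so)" by (auto simp: tot_on_def trn_on_def)
  qed (auto simp: Fk_def)
next
  case (Suc k)
  show ?case
  proof (rule preorder_step[OF Suc.prems, where L = "Fk k"])
    show "tot_on (Fk k) (G so)" "trn_on (Fk k) (G so)" using Suc by auto
    fix f t l assume "Fn f t \<in> Fk (Suc k)" "l \<in> set (prod_leaves t)"
    then show "l \<in> Fk k" unfolding Fk_def using factor_leaves fd_pl by fastforce
  qed (auto simp: Fk_def)
qed

definition Fac :: "('c, 'v, 'f) trm set" where "Fac = {a. is_factor a}"

lemma Fac_pre: assumes "linear_order_on UNIV so"
  shows "tot_on Fac (ge_l so)" "trn_on Fac (ge_l so)"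
proof -
  have k: "x \<in> Fk (fd x + fd y + fd z)" "y \<in> Fk (fd x + fd y + fd z)" "z \<in> Fk (fd x + fd y + fd z)"
    if "x \<in> Fac" "y \<in> Fac" "z \<in> Fac" for x y z :: "('a,'b,'c) trm"
    using that by (auto simp: Fk_def Fac_def)
  show "tot_on Fac (ge_l so)" unfolding tot_on_def ge_l_G
    using Fk_pre[OF assms] k unfolding tot_on_def by metis
  show "trn_on Fac (ge_l so)" unfolding trn_on_def ge_l_G
    using Fk_pre[OF assms] k unfolding trn_on_def by metis
qed

lemma gel_addmul: "is_add a \<or> is_mul a \<or> is_add b \<or> is_mul b \<Longrightarrow> gel_fuel so n a b = False"
  by (cases n; cases a; cases b) auto

lemma gel_flat: "gel_fuel so n (flat a) (flat b) = gel_fuel so n a b"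
proof (induction n arbitrary: a b)
  case 0 then show ?case by simp
next
  case (Suc k)
  show ?case
  proof (cases "is_add a \<or> is_mul a \<or> is_add b \<or> is_mul b")
    case True
    then show ?thesis using gel_addmul[of "flat a" "flat b"] gel_addmul[of a b]
      by (simp add: is_add_flat is_mul_flat)
  next
    case False
    have sm: "sort_by (gel_fuel so k) (map flat xs) = map flat (sort_by (gel_fuel so k) xs)" for xs
      by (rule sort_map) (rule Suc.IH)
    have lm: "lex_ge (gel_fuel so k) (map flat xs) (map flat ys) = lex_ge (gel_fuel so k) xs ys" for xs ys
      by (rule lex_map) (rule Suc.IH)
    from False show ?thesis
      by (cases a; cases b) (auto simp: pl_flat sm lm)
  qed
qed

lemma ge_l_flat: "ge_l so (flat a) (flat b) = ge_l so a b"
  unfolding ge_l_def size_flat gel_flat ..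

lemma ge_p_flat: "ge_p so (flat a) (flat b) = ge_p so a b"
proof -
  have sm: "sort_by (ge_l so) (map flat xs) = map flat (sort_by (ge_l so) xs)" for xs
    by (rule sort_map) (rule ge_l_flat)
  have lm: "lex_ge (ge_l so) (map flat xs) (map flat ys) = lex_ge (ge_l so) xs ys" for xs ys
    by (rule lex_map) (rule ge_l_flat)
  show ?thesis unfolding ge_p_def pl_flat sm lm ..
qed

definition Mon :: "('c::zero, 'v, 'f) trm set" where "Mon = {m. is_monomial m}"

lemma Mon_pre: assumes "linear_order_on UNIV so"
  shows "tot_on Mon (ge_p so)" "trn_on Mon (ge_p so)"
proof -
  have sub: "set (sort_by (ge_l so) (prod_leaves m)) \<subseteq> Fac" if "m \<in> Mon" for m :: "('a,'b,'c) trm"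
    using that by (auto simp: set_sort Mon_def is_monomial_def Fac_def)
  show "tot_on Mon (ge_p so)" unfolding tot_on_def ge_p_def
    using lex_total[OF Fac_pre(1)[OF assms] sub sub] by blast
  show "trn_on Mon (ge_p so)" unfolding trn_on_def ge_p_def
  proof (intro ballI impI)
    fix x y z :: "('a,'b,'c) trm" assume "x \<in> Mon" "y \<in> Mon" "z \<in> Mon"
      and "lex_ge (ge_l so) (sort_by (ge_l so) (prod_leaves x)) (sort_by (ge_l so) (prod_leaves y))"
      "lex_ge (ge_l so) (sort_by (ge_l so) (prod_leaves y)) (sort_by (ge_l so) (prod_leaves z))"
    then show "lex_ge (ge_l so) (sort_by (ge_l so) (prod_leaves x)) (sort_by (ge_l so) (prod_leaves z))"
      using lex_trans[OF Fac_pre(2)[OF assms] sub sub sub] by blast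
  qed
qed

primrec NN :: "('c::zero, 'v, 'f) sym rel \<Rightarrow> nat \<Rightarrow> ('c, 'v, 'f) trm \<Rightarrow> nat" where
  "NN so B (Cst c) = 0"
| "NN so B (Var v) = 0"
| "NN so B (Add a b) = (if is_add a then NN so B a else B * NN so B a) +
     (if is_add b then NN so B b else B * NN so B b) + cross (ge_p so) (sum_leaves a) (sum_leaves b)"
| "NN so B (Mul a b) = (if is_mul a then NN so B a else B * NN so B a) +
     (if is_mul b then NN so B b else B * NN so B b) + cross (ge_l so) (prod_leaves a) (prod_leaves b)"
| "NN so B (Fn f t) = NN so B t"

lemma NN_sl: "(if is_add t then NN so B t else B * NN so B t) =
   B * sum_list (map (NN so B) (sum_leaves t)) + ninv (ge_p so) (sum_leaves t)"
proof (induction t)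
  case (Add a b)
  then show ?case by (simp add: ninv_append algebra_simps)
qed auto

lemma NN_pl: "(if is_mul t then NN so B t else B * NN so B t) =
   B * sum_list (map (NN so B) (prod_leaves t)) + ninv (ge_l so) (prod_leaves t)"
proof (induction t)
  case (Mul a b)
  then show ?case by (simp add: ninv_append algebra_simps)
qed auto

lemma NN_flat_add: "is_add x \<Longrightarrow> NN so B (flat x) =
   B * sum_list (map (NN so B) (map flat (sum_leaves x))) + ninv (ge_p so) (map flat (sum_leaves x))"
  using NN_sl[of "flat x" so B] by (simp add: is_add_flat sl_flat)

lemma NN_flat_mul: "is_mul x \<Longrightarrow> NN so B (flat x) =
   B * sum_list (map (NN so B) (map flat (prod_leaves x))) + ninv (ge_l so) (map flat (prod_leaves x))"
  using NN_pl[of "flat x" so B] by (simp add: is_mul_flat pl_flat)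

definition LD :: "('c::zero, 'v, 'f) sym rel \<Rightarrow> nat \<Rightarrow> (('c, 'v, 'f) trm \<Rightarrow> ('c, 'v, 'f) trm \<Rightarrow> bool) \<Rightarrow>
    ('c, 'v, 'f) trm list \<Rightarrow> ('c, 'v, 'f) trm list \<Rightarrow> bool" where
  "LD so B ge xs ys \<longleftrightarrow> sum_list (map (NN so B) ys) < sum_list (map (NN so B) xs) \<or>
     (mset ys = mset xs \<and> ninv ge ys < ninv ge xs)"

lemma LD_dec: assumes "LD so B ge xs ys" "ninv ge ys < B"
  shows "B * sum_list (map (NN so B) ys) + ninv ge ys < B * sum_list (map (NN so B) xs) + ninv ge xs"
proof (cases "sum_list (map (NN so B) ys) < sum_list (map (NN so B) xs)")
  case True
  then have "Suc (sum_list (map (NN so B) ys)) \<le> sum_list (map (NN so B) xs)" by simp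
  then have "B * Suc (sum_list (map (NN so B) ys)) \<le> B * sum_list (map (NN so B) xs)" by (rule mult_le_mono2)
  then show ?thesis using assms(2) by simp
next
  case False
  then have "mset ys = mset xs \<and> ninv ge ys < ninv ge xs" using assms(1) unfolding LD_def by simp
  then show ?thesis using sum_list_mset[of ys xs "NN so B"] by simp
qed

lemma LD_app1: "LD so B ge xs ys \<Longrightarrow> LD so B ge (xs @ zs) (ys @ zs)"
  unfolding LD_def using cross_mset1[of ys xs ge zs] by (auto simp: ninv_append)
lemma LD_app2: "LD so B ge xs ys \<Longrightarrow> LD so B ge (zs @ xs) (zs @ ys)"
  unfolding LD_def using cross_mset2[of ys xs ge zs] by (auto simp: ninv_append)

lemma ninv_lt: "length xs \<le> Sz \<Longrightarrow> ninv ge xs < Sz * Sz + 1"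
proof -
  assume "length xs \<le> Sz"
  then have "length xs * length xs \<le> Sz * Sz" by (intro mult_mono) auto
  then show ?thesis using ninv_bound[of ge xs] by simp
qed

lemma dec_add: "is_add x \<Longrightarrow> is_add y \<Longrightarrow> LD so B (ge_p so) (map flat (sum_leaves x)) (map flat (sum_leaves y)) \<Longrightarrow>
   size y \<le> Sz \<Longrightarrow> B = Sz * Sz + 1 \<Longrightarrow> NN so B (flat y) < NN so B (flat x)"
  unfolding NN_flat_add
  by (rule LD_dec) (use length_sl[of y] ninv_lt[of "map flat (sum_leaves y)" Sz] in auto)

lemma dec_mul: "is_mul x \<Longrightarrow> is_mul y \<Longrightarrow> LD so B (ge_l so) (map flat (prod_leaves x)) (map flat (prod_leaves y)) \<Longrightarrow>
   size y \<le> Sz \<Longrightarrow> B = Sz * Sz + 1 \<Longrightarrow> NN so B (flat y) < NN so B (flat x)"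
  unfolding NN_flat_mul
  by (rule LD_dec) (use length_pl[of y] ninv_lt[of "map flat (prod_leaves y)" Sz] in auto)

definition Cl :: "('c::zero, 'v, 'f) sym rel \<Rightarrow> nat \<Rightarrow> ('c, 'v, 'f) trm \<Rightarrow> ('c, 'v, 'f) trm \<Rightarrow> bool" where
  "Cl so B s t \<longleftrightarrow> NN so B (flat t) < NN so B (flat s) \<and> is_add t = is_add s \<and> is_mul t = is_mul s \<and>
    (is_add s \<longrightarrow> LD so B (ge_p so) (map flat (sum_leaves s)) (map flat (sum_leaves t))) \<and>
    (is_mul s \<longrightarrow> LD so B (ge_l so) (map flat (prod_leaves s)) (map flat (prod_leaves t)))"

lemma LD_single: "NN so B (flat t) < NN so B (flat s) \<Longrightarrow> LD so B ge [flat s] [flat t]"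
  unfolding LD_def by simp

lemma lift_add1: assumes "Cl so B s t" "size (Add s u) \<le> Sz" "size t = size s" "B = Sz * Sz + 1"
  shows "Cl so B (Add s u) (Add t u)"
proof -
  have "LD so B (ge_p so) (map flat (sum_leaves s)) (map flat (sum_leaves t))"
  proof (cases "is_add s")
    case True then show ?thesis using assms(1) unfolding Cl_def by simp
  next
    case False
    then have nt: "\<not> is_add t" using assms(1) unfolding Cl_def by simp
    have d: "NN so B (flat t) < NN so B (flat s)" using assms(1) unfolding Cl_def by simp
    show ?thesis using LD_single[OF d] False nt by (simp add: sl_nonadd)
  qed
  then have L: "LD so B (ge_p so) (map flat (sum_leaves (Add s u))) (map flat (sum_leaves (Add t u)))"
    by (simp add: LD_app1)
  have "NN so B (flat (Add t u)) < NN so B (flat (Add s u))"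
    by (rule dec_add[OF _ _ L]) (use assms in auto)
  then show ?thesis unfolding Cl_def using L by simp
qed

lemma lift_add2: assumes "Cl so B s t" "size (Add u s) \<le> Sz" "size t = size s" "B = Sz * Sz + 1"
  shows "Cl so B (Add u s) (Add u t)"
proof -
  have "LD so B (ge_p so) (map flat (sum_leaves s)) (map flat (sum_leaves t))"
  proof (cases "is_add s")
    case True then show ?thesis using assms(1) unfolding Cl_def by simp
  next
    case False
    then have nt: "\<not> is_add t" using assms(1) unfolding Cl_def by simp
    have d: "NN so B (flat t) < NN so B (flat s)" using assms(1) unfolding Cl_def by simp
    show ?thesis using LD_single[OF d] False nt by (simp add: sl_nonadd)
  qed
  then have L: "LD so B (ge_p so) (map flat (sum_leaves (Add u s))) (map flat (sum_leaves (Add u t)))"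
    by (simp add: LD_app2)
  have "NN so B (flat (Add u t)) < NN so B (flat (Add u s))"
    by (rule dec_add[OF _ _ L]) (use assms in auto)
  then show ?thesis unfolding Cl_def using L by simp
qed

lemma lift_mul1: assumes "Cl so B s t" "size (Mul s u) \<le> Sz" "size t = size s" "B = Sz * Sz + 1"
  shows "Cl so B (Mul s u) (Mul t u)"
proof -
  have "LD so B (ge_l so) (map flat (prod_leaves s)) (map flat (prod_leaves t))"
  proof (cases "is_mul s")
    case True then show ?thesis using assms(1) unfolding Cl_def by simp
  next
    case False
    then have nt: "\<not> is_mul t" using assms(1) unfolding Cl_def by simp
    have d: "NN so B (flat t) < NN so B (flat s)" using assms(1) unfolding Cl_def by simp
    show ?thesis using LD_single[OF d] False nt by (simp add: pl_nonmul)
  qed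
  then have L: "LD so B (ge_l so) (map flat (prod_leaves (Mul s u))) (map flat (prod_leaves (Mul t u)))"
    by (simp add: LD_app1)
  have "NN so B (flat (Mul t u)) < NN so B (flat (Mul s u))"
    by (rule dec_mul[OF _ _ L]) (use assms in auto)
  then show ?thesis unfolding Cl_def using L by simp
qed

lemma lift_mul2: assumes "Cl so B s t" "size (Mul u s) \<le> Sz" "size t = size s" "B = Sz * Sz + 1"
  shows "Cl so B (Mul u s) (Mul u t)"
proof -
  have "LD so B (ge_l so) (map flat (prod_leaves s)) (map flat (prod_leaves t))"
  proof (cases "is_mul s")
    case True then show ?thesis using assms(1) unfolding Cl_def by simp
  next
    case False
    then have nt: "\<not> is_mul t" using assms(1) unfolding Cl_def by simp
    have d: "NN so B (flat t) < NN so B (flat s)" using assms(1) unfolding Cl_def by simp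
    show ?thesis using LD_single[OF d] False nt by (simp add: pl_nonmul)
  qed
  then have L: "LD so B (ge_l so) (map flat (prod_leaves (Mul u s))) (map flat (prod_leaves (Mul u t)))"
    by (simp add: LD_app2)
  have "NN so B (flat (Mul u t)) < NN so B (flat (Mul u s))"
    by (rule dec_mul[OF _ _ L]) (use assms in auto)
  then show ?thesis unfolding Cl_def using L by simp
qed

lemma lift_fn: "Cl so B s t \<Longrightarrow> Cl so B (Fn f s) (Fn f t)"
  unfolding Cl_def by simp

lemma R12_arith: assumes "3 \<le> a" "3 \<le> b" shows "(2::nat) ^ a + 2 ^ b + 1 + 3 + 1 < 2 ^ (a + b + 1)"
proof -
  have X: "(8::nat) \<le> 2 ^ a" using power_increasing[of 3 a "2::nat"] assms by simp
  have Y: "(8::nat) \<le> 2 ^ b" using power_increasing[of 3 b "2::nat"] assms by simp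
  have "(2::nat) ^ a * 8 \<le> 2 ^ a * 2 ^ b" using Y by simp
  moreover have "(2::nat) ^ b * 8 \<le> 2 ^ a * 2 ^ b" using X by simp
  moreover have "(2::nat) ^ (a + b + 1) = 2 * (2 ^ a * 2 ^ b)" by (simp add: power_add)
  ultimately show ?thesis using X Y by linarith
qed

lemma sort_single: "sort_by ge [x] = [x]" by (simp add: sort_by_def)

lemma len2: "sort_by ge xs \<noteq> xs \<Longrightarrow> xs \<noteq> [] \<Longrightarrow> length xs \<ge> 2"
  by (cases xs rule: remdups_adj.cases) (auto simp: sort_single)

lemma R1_case:
  assumes lin: "linear_order_on UNIV so"
    and mon: "\<forall>m\<in>set (sum_leaves t0). is_monomial m"
    and ns: "sort_by (ge_p so) (sum_leaves t0) \<noteq> sum_leaves t0"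
  defines "r \<equiv> mk_add (sort_by (ge_p so) (sum_leaves t0))"
  shows "PP r = PP t0 \<and> size r = size t0 \<and> (\<forall>Sz. size t0 \<le> Sz \<longrightarrow> Cl so (Sz * Sz + 1) t0 r)"
proof -
  let ?ys = "sort_by (ge_p so) (sum_leaves t0)"
  have len: "length (sum_leaves t0) \<ge> 2" using len2[OF ns sl_ne] .
  have isa: "is_add t0" using len sl_nonadd[of t0] by fastforce
  have ysne: "?ys \<noteq> []" using len length_sort[of "ge_p so" "sum_leaves t0"] by auto
  have ysl: "\<forall>x\<in>set ?ys. \<not> is_add x" using sl_leaf by (auto simp: set_sort)
  have slr: "sum_leaves r = ?ys" unfolding r_def by (rule mk_add_sl[OF ysne ysl])
  have l2: "length ?ys \<ge> 2" using len by (simp add: length_sort)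
  have nm0: "\<not> is_mul t0" using isa by (cases t0) auto
  have isr: "is_add r" "\<not> is_mul r" unfolding r_def using mk_add_is[OF l2] mk_add_nm[OF l2] by auto
  have ms: "mset ?ys = mset (sum_leaves t0)" by (rule mset_sort)
  have P: "PP r = PP t0"
    using PP_sl[of r] PP_sl[of t0] sum_list_mset[OF ms, of "\<lambda>l. PP l + 1"] slr by simp
  have Sz: "size r = size t0"
    using size_sl[of r] size_sl[of t0] sum_list_mset[OF ms, of "\<lambda>l. size l + 1"] slr by simp
  have sub: "set (sum_leaves t0) \<subseteq> Mon" using mon by (auto simp: Mon_def)
  have tot: "tot_on (set (sum_leaves t0)) (ge_p so)" by (rule tot_on_mono[OF Mon_pre(1)[OF lin] sub])
  have trn: "trn_on (set (sum_leaves t0)) (ge_p so)" by (rule trn_on_mono[OF Mon_pre(2)[OF lin] sub])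
  have i0: "ninv (ge_p so) ?ys = 0" by (rule sorted_ninv[OF sort_sorted[OF tot trn]])
  have i1: "ninv (ge_p so) (sum_leaves t0) \<noteq> 0" using T1[OF tot] ns by blast
  have nm: "ninv (ge_p so) (map flat xs) = ninv (ge_p so) xs" for xs
    by (rule ninv_map) (rule ge_p_flat)
  have L: "LD so B (ge_p so) (map flat (sum_leaves t0)) (map flat (sum_leaves r))" for B
    unfolding LD_def slr nm using i0 i1 ms by simp
  have "Cl so (Sz * Sz + 1) t0 r" if "size t0 \<le> Sz" for Sz
  proof -
    have "NN so (Sz * Sz + 1) (flat r) < NN so (Sz * Sz + 1) (flat t0)"
      by (rule dec_add[OF isa isr(1) L]) (use that Sz in auto)
    then show ?thesis unfolding Cl_def using isa isr L nm0 by auto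
  qed
  then show ?thesis using P Sz by auto
qed

lemma R2_case:
  assumes lin: "linear_order_on UNIV so"
    and fac: "\<forall>a\<in>set (prod_leaves t0). is_factor a"
    and ns: "sort_by (ge_l so) (prod_leaves t0) \<noteq> prod_leaves t0"
  defines "r \<equiv> mk_mul (sort_by (ge_l so) (prod_leaves t0))"
  shows "PP r = PP t0 \<and> size r = size t0 \<and> (\<forall>Sz. size t0 \<le> Sz \<longrightarrow> Cl so (Sz * Sz + 1) t0 r)"
proof -
  let ?ys = "sort_by (ge_l so) (prod_leaves t0)"
  have len: "length (prod_leaves t0) \<ge> 2" using len2[OF ns pl_ne] .
  have isa: "is_mul t0" using len pl_nonmul[of t0] by fastforce
  have ysne: "?ys \<noteq> []" using len length_sort[of "ge_l so" "prod_leaves t0"] by auto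
  have ysl: "\<forall>x\<in>set ?ys. \<not> is_mul x" using pl_leaf by (auto simp: set_sort)
  have slr: "prod_leaves r = ?ys" unfolding r_def by (rule mk_mul_pl[OF ysne ysl])
  have l2: "length ?ys \<ge> 2" using len by (simp add: length_sort)
  have nm0: "\<not> is_add t0" using isa by (cases t0) auto
  have isr: "is_mul r" "\<not> is_add r" unfolding r_def using mk_mul_is[OF l2] mk_mul_na[OF l2] by auto
  have ms: "mset ?ys = mset (prod_leaves t0)" by (rule mset_sort)
  have P: "PP r = PP t0"
    using PP_pl[of r] PP_pl[of t0] prod_list_mset[OF ms, of "PP"] slr by simp
  have Sz: "size r = size t0"
    using size_pl[of r] size_pl[of t0] sum_list_mset[OF ms, of "\<lambda>l. size l + 1"] slr by simp
  have sub: "set (prod_leaves t0) \<subseteq> Fac" using fac by (auto simp: Fac_def)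
  have tot: "tot_on (set (prod_leaves t0)) (ge_l so)" by (rule tot_on_mono[OF Fac_pre(1)[OF lin] sub])
  have trn: "trn_on (set (prod_leaves t0)) (ge_l so)" by (rule trn_on_mono[OF Fac_pre(2)[OF lin] sub])
  have i0: "ninv (ge_l so) ?ys = 0" by (rule sorted_ninv[OF sort_sorted[OF tot trn]])
  have i1: "ninv (ge_l so) (prod_leaves t0) \<noteq> 0" using T1[OF tot] ns by blast
  have nm: "ninv (ge_l so) (map flat xs) = ninv (ge_l so) xs" for xs
    by (rule ninv_map) (rule ge_l_flat)
  have L: "LD so B (ge_l so) (map flat (prod_leaves t0)) (map flat (prod_leaves r))" for B
    unfolding LD_def slr nm using i0 i1 ms by simp
  have "Cl so (Sz * Sz + 1) t0 r" if "size t0 \<le> Sz" for Sz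
  proof -
    have "NN so (Sz * Sz + 1) (flat r) < NN so (Sz * Sz + 1) (flat t0)"
      by (rule dec_mul[OF isa isr(1) L]) (use that Sz in auto)
    then show ?thesis unfolding Cl_def using isa isr L nm0 by auto
  qed
  then show ?thesis using P Sz by auto
qed

lemma root_main:
  assumes lin: "linear_order_on UNIV so" and st: "root_step so cf s t"
  shows "PP t < PP s \<or> (PP t = PP s \<and> size t = size s \<and> (\<forall>Sz. size s \<le> Sz \<longrightarrow> Cl so (Sz * Sz + 1) s t))"
  using st
proof (cases rule: root_step.cases)
  case R1 then show ?thesis using R1_case[OF lin] by blast
next
  case R2 then show ?thesis using R2_case[OF lin] by blast
next
  case (R3 x) then show ?thesis using PP_ge[of x] by auto
next
  case (R4 x)
  then show ?thesis using PP_ge[of x] by auto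
next
  case (R5 x)
  then show ?thesis using PP_ge[of x] by auto
next
  case R6 then show ?thesis by auto
next
  case R7 then show ?thesis by auto
next
  case R8 then show ?thesis using PP_ge[of t] by auto
next
  case R9 then show ?thesis using PP_ge[of t] by auto
next
  case (R10 t1 t2 x)
  then show ?thesis using PP_ge[of x] by (auto simp: algebra_simps)
next
  case (R11 x t1 t2)
  then show ?thesis using PP_ge[of x] by (auto simp: algebra_simps)
next
  case (R12 f t1 t2)
  then show ?thesis using R12_arith[OF PP_ge[of t1] PP_ge[of t2]] by simp
next
  case (R13 f)
  then show ?thesis by simp
qed

lemma main:
  assumes lin: "linear_order_on UNIV so"
  shows "ctx_step so cf s t \<Longrightarrow> PP t < PP s \<or> (PP t = PP s \<and> size t = size s \<and> (\<forall>Sz. size s \<le> Sz \<longrightarrow> Cl so (Sz * Sz + 1) s t))"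
proof (induction rule: ctx_step.induct)
  case (root s t) then show ?case using root_main[OF lin] by blast
next
  case (add1 s t u)
  from add1.IH show ?case
  proof
    assume "PP t < PP s" then show ?thesis by simp
  next
    assume h: "PP t = PP s \<and> size t = size s \<and> (\<forall>Sz. size s \<le> Sz \<longrightarrow> Cl so (Sz * Sz + 1) s t)"
    have "Cl so (Sz * Sz + 1) (Add s u) (Add t u)" if "size (Add s u) \<le> Sz" for Sz
      by (rule lift_add1) (use h that in auto)
    then show ?thesis using h by auto
  qed
next
  case (add2 s t u)
  from add2.IH show ?case
  proof
    assume "PP t < PP s" then show ?thesis by simp
  next
    assume h: "PP t = PP s \<and> size t = size s \<and> (\<forall>Sz. size s \<le> Sz \<longrightarrow> Cl so (Sz * Sz + 1) s t)"
    have "Cl so (Sz * Sz + 1) (Add u s) (Add u t)" if "size (Add u s) \<le> Sz" for Sz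
      by (rule lift_add2) (use h that in auto)
    then show ?thesis using h by auto
  qed
next
  case (mul1 s t u)
  from mul1.IH show ?case
  proof
    assume "PP t < PP s"
    moreover have "0 < PP u" using PP_ge[of u] by simp
    ultimately show ?thesis by simp
  next
    assume h: "PP t = PP s \<and> size t = size s \<and> (\<forall>Sz. size s \<le> Sz \<longrightarrow> Cl so (Sz * Sz + 1) s t)"
    have "Cl so (Sz * Sz + 1) (Mul s u) (Mul t u)" if "size (Mul s u) \<le> Sz" for Sz
      by (rule lift_mul1) (use h that in auto)
    then show ?thesis using h by auto
  qed
next
  case (mul2 s t u)
  from mul2.IH show ?case
  proof
    assume "PP t < PP s"
    moreover have "0 < PP u" using PP_ge[of u] by simp
    ultimately show ?thesis by simp
  next
    assume h: "PP t = PP s \<and> size t = size s \<and> (\<forall>Sz. size s \<le> Sz \<longrightarrow> Cl so (Sz * Sz + 1) s t)"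
    have "Cl so (Sz * Sz + 1) (Mul u s) (Mul u t)" if "size (Mul u s) \<le> Sz" for Sz
      by (rule lift_mul2) (use h that in auto)
    then show ?thesis using h by auto
  qed
next
  case (fn s t f)
  from fn.IH show ?case
  proof
    assume "PP t < PP s" then show ?thesis by simp
  next
    assume h: "PP t = PP s \<and> size t = size s \<and> (\<forall>Sz. size s \<le> Sz \<longrightarrow> Cl so (Sz * Sz + 1) s t)"
    have "Cl so (Sz * Sz + 1) (Fn f s) (Fn f t)" if "size (Fn f s) \<le> Sz" for Sz
    proof -
      have "size s \<le> Sz" using that by simp
      then have "Cl so (Sz * Sz + 1) s t" using h by blast
      then show ?thesis by (rule lift_fn)
    qed
    then show ?thesis using h by auto
  qed
qed

theorem lemma2:
  fixes so :: "('c::field, 'v, 'f::finite) sym rel" and cf :: "'f \<Rightarrow> 'c" and n :: nat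
  assumes "finite (UNIV :: 'c set)" and "card (UNIV :: 'c set) = 2 ^ n"
    and "linear_order_on UNIV so"
  shows "\<forall>\<tau>. \<not> (\<exists>S. S 0 = \<tau> \<and> (\<forall>i. rstep so cf (S i) (S (Suc i))))"
proof (intro allI notI)
  fix \<tau> :: "('c, 'v, 'f) trm"
  assume "\<exists>S. S 0 = \<tau> \<and> (\<forall>i. rstep so cf (S i) (S (Suc i)))"
  then obtain S where st: "\<forall>i. rstep so cf (S i) (S (Suc i))" by blast
  define \<mu> where "\<mu> x = (PP (flat x), NN so (size (flat x) * size (flat x) + 1) (flat x))"
    for x :: "('c, 'v, 'f) trm"
  have dec: "(\<mu> (S (Suc i)), \<mu> (S i)) \<in> less_than <*lex*> less_than" for i
  proof -
    obtain s' t' where a1: "aeq (S i) s'" "ctx_step so cf s' t'" "aeq t' (S (Suc i))"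
      using st unfolding rstep_def by blast
    have f1: "flat (S i) = flat s'" using flat_aeq[OF a1(1)] .
    have f2: "flat (S (Suc i)) = flat t'" using flat_aeq[OF a1(3)] by simp
    from main[OF assms(3) a1(2)] show ?thesis
      unfolding \<mu>_def f1 f2 PP_flat size_flat Cl_def by auto
  qed
  have "wf (less_than <*lex*> less_than)" by (intro wf_lex_prod wf_less_than)
  moreover have "\<forall>i. ((\<mu> \<circ> S) (Suc i), (\<mu> \<circ> S) i) \<in> less_than <*lex*> less_than"
    using dec by simp
  ultimately show False unfolding wf_iff_no_infinite_down_chain by blast
qed

end
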